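(* Let $Y$ be a finite-dimensional real or complex vector space, let $\mathfrak g\subset\mathfrak{gl}(Y)$ be a Lie subalgebra (with bracket $[S,T]=ST-TS$, acting on $Y$ by $y\mapsto Ty$), and let $\omega$ be a bilinear form on $Y$ with $\omega(Tx,y)+\omega(x,Ty)=0$ for all $T\in\mathfrak g$, $x,y\in Y$. Define $F\colon Y\to\mathfrak g^*$ by $\langle F(y),T\rangle=\tfrac12\omega(Ty,y)$. Let $\alpha\colon\mathfrak g^*\to\mathfrak g$ and $f(y)=\alpha(F(y))y$. For $T\in\mathfrak g$ define $\beta(T)\colon\mathfrak g^*\to\mathfrak g^*$ by $\langle\beta(T)z,S\rangle=\langle z,[S,T]\rangle$ for all $S\in\mathfrak g$. Then $f$ is $F$-related to $g(z)=\beta(\alpha(z))z=-\operatorname{ad}^*_{\alpha(z)}z$, i.e. $F'(y)f(y)=g(F(y))$ for all $y\in Y$. Additionally, if $\mathfrak g$ is closed under $(S,T)\mapsto U_TS:=TST$, then $F''(f(y),f(y))=\gamma(F(y))$ for all $y\in Y$, where $\gamma(z)\in\mathfrak g^*$ is given by $\langle\gamma(z),S\rangle=-2\langle z,\alpha(z)S\alpha(z)\rangle$ for all $S\in\mathfrak g$, i.e. $\gamma(z)=-2U^*_{\alpha(z)}z$.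
   Context: $\langle\cdot,\cdot\rangle$ is the pairing between $\mathfrak g^*$ and $\mathfrak g$. $\operatorname{ad}^*_Tz$ is defined by $\langle\operatorname{ad}^*_Tz,S\rangle=\langle z,[T,S]\rangle$, and $U^*_Tz$ by $\langle U^*_Tz,S\rangle=\langle z,TST\rangle$. $F''$ denotes the constant symmetric bilinear second derivative of the quadratic map $F$. *)

theory Defs
  imports "HOL-Analysis.Analysis"
begin

text \<open>Y = 'k^'n (finite-dimensional, scalars 'k real or complex, generalised to any
real normed field); gl(Y) = 'k^'n^'n acting by matrix-vector product.
Elements of the dual g* are represented by functions on matrices; only their values on
the subalgebra G matter, so equalities in g* are stated for all S in G.\<close>

definition mat_scale :: "'k::field \<Rightarrow> 'k^'n^'n \<Rightarrow> 'k^'n^'n" where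
  "mat_scale c A = (\<chi> i j. c * A$i$j)"

definition lie_bracket :: "'k::field^'n^'n \<Rightarrow> 'k^'n^'n \<Rightarrow> 'k^'n^'n" where
  "lie_bracket S T = S ** T - T ** S"

definition lie_subalgebra :: "('k::field^'n^'n) set \<Rightarrow> bool" where
  "lie_subalgebra G \<longleftrightarrow> 0 \<in> G \<and> (\<forall>A\<in>G. \<forall>B\<in>G. A + B \<in> G)
     \<and> (\<forall>c. \<forall>A\<in>G. mat_scale c A \<in> G) \<and> (\<forall>A\<in>G. \<forall>B\<in>G. lie_bracket A B \<in> G)"

definition bilinear_form :: "('k::field^'n \<Rightarrow> 'k^'n \<Rightarrow> 'k) \<Rightarrow> bool" where
  "bilinear_form \<omega> \<longleftrightarrow>
     (\<forall>x x' y. \<omega> (x + x') y = \<omega> x y + \<omega> x' y) \<and> (\<forall>c x y. \<omega> (c *s x) y = c * \<omega> x y) \<and>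
     (\<forall>x y y'. \<omega> x (y + y') = \<omega> x y + \<omega> x y') \<and> (\<forall>c x y. \<omega> x (c *s y) = c * \<omega> x y)"

definition moment_map :: "('k::field^'n \<Rightarrow> 'k^'n \<Rightarrow> 'k) \<Rightarrow> 'k^'n \<Rightarrow> ('k^'n^'n \<Rightarrow> 'k)" where
  "moment_map \<omega> y = (\<lambda>T. (1/2) * \<omega> (T *v y) y)"

definition beta :: "'k::field^'n^'n \<Rightarrow> ('k^'n^'n \<Rightarrow> 'k) \<Rightarrow> ('k^'n^'n \<Rightarrow> 'k)" where
  "beta T z = (\<lambda>S. z (lie_bracket S T))"

definition second_deriv :: "('a::real_normed_vector \<Rightarrow> 'b::real_normed_vector) \<Rightarrow> 'a \<Rightarrow> 'a \<Rightarrow> 'a \<Rightarrow> 'b" where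
  "second_deriv \<phi> x u v = frechet_derivative (\<lambda>w. frechet_derivative \<phi> (at w) u) (at x) v"

end

theory Submission imports Defs begin

lemma bf_sum_left:
  assumes "bilinear_form (b::'k::field^'n \<Rightarrow> 'k^'n \<Rightarrow> 'k)" "finite A"
  shows "b (\<Sum>i\<in>A. f i) y = (\<Sum>i\<in>A. b (f i) y)"
  using assms(2)
proof induction
  case empty
  have "b ((0::'k) *s 0) y = 0 * b 0 y" using assms(1) unfolding bilinear_form_def by blast
  then show ?case by simp
next
  case (insert x F)
  then show ?case using assms(1) unfolding bilinear_form_def by simp
qed

lemma bf_sum_right:
  assumes "bilinear_form (b::'k::field^'n \<Rightarrow> 'k^'n \<Rightarrow> 'k)" "finite A"
  shows "b y (\<Sum>i\<in>A. f i) = (\<Sum>i\<in>A. b y (f i))"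
  using assms(2)
proof induction
  case empty
  have "b y ((0::'k) *s 0) = 0 * b y 0" using assms(1) unfolding bilinear_form_def by blast
  then show ?case by simp
next
  case (insert x F)
  then show ?case using assms(1) unfolding bilinear_form_def by simp
qed

lemma bf_expand:
  assumes "bilinear_form (b::'k::field^'n \<Rightarrow> 'k^'n \<Rightarrow> 'k)"
  shows "b x y = (\<Sum>i\<in>UNIV. \<Sum>j\<in>UNIV. x$i * y$j * b (axis i 1) (axis j 1))"
proof -
  have "b x y = b (\<Sum>i\<in>UNIV. x$i *s axis i 1) (\<Sum>j\<in>UNIV. y$j *s axis j 1)"
    by (simp add: basis_expansion)
  also have "\<dots> = (\<Sum>i\<in>UNIV. \<Sum>j\<in>UNIV. x$i * y$j * b (axis i 1) (axis j 1))"
    using assms unfolding bf_sum_left[OF assms finite_class.finite_UNIV] bf_sum_right[OF assms finite_class.finite_UNIV]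
    by (simp add: bilinear_form_def mult_ac) (rule sum.swap)
  finally show ?thesis .
qed

lemma scaleR_vec: "r *\<^sub>R (x::'k::real_normed_field^'n) = (of_real r :: 'k) *s x"
  by (simp add: vec_eq_iff; simp add: scaleR_conv_of_real)

lemma bf_bb:
  assumes "bilinear_form (b::'k::real_normed_field^'n \<Rightarrow> 'k^'n \<Rightarrow> 'k)"
  shows "bounded_bilinear b"
proof
  fix a a' bb bb' :: "'k^'n" and r :: real
  show "b (a + a') bb = b a bb + b a' bb" "b a (bb + bb') = b a bb + b a bb'"
    using assms unfolding bilinear_form_def by auto
  show "b (r *\<^sub>R a) bb = r *\<^sub>R b a bb" "b a (r *\<^sub>R bb) = r *\<^sub>R b a bb"
    using assms unfolding bilinear_form_def scaleR_vec by (auto simp: scaleR_conv_of_real)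
next
  let ?K = "\<Sum>i\<in>UNIV. \<Sum>j\<in>(UNIV::'n set). norm (b (axis i 1) (axis j 1))"
  show "\<exists>K. \<forall>x y. norm (b x y) \<le> norm x * norm y * K"
  proof (intro exI allI)
    fix x y :: "'k^'n"
    have "norm (b x y) \<le> (\<Sum>i\<in>UNIV. \<Sum>j\<in>UNIV. norm (x$i * y$j * b (axis i 1) (axis j 1)))"
      unfolding bf_expand[OF assms, of x y]
      by (rule order_trans[OF norm_sum sum_mono]) (rule norm_sum)
    also have "\<dots> \<le> (\<Sum>i\<in>UNIV. \<Sum>j\<in>UNIV. norm x * norm y * norm (b (axis i 1) (axis j 1)))"
      unfolding norm_mult
      apply (intro sum_mono mult_right_mono mult_mono norm_nth_le) apply (auto simp: Finite_Cartesian_Product.norm_nth_le) done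
    also have "\<dots> = norm x * norm y * ?K"
      by (simp add: sum_distrib_left)
    finally show "norm (b x y) \<le> norm x * norm y * ?K" .
  qed
qed


lemma bf_mat:
  assumes "bilinear_form (\<omega>::'k::field^'n \<Rightarrow> 'k^'n \<Rightarrow> 'k)"
  shows "bilinear_form (\<lambda>x y. \<omega> (S *v x) y)"
  using assms unfolding bilinear_form_def
  by (simp add: matrix_vector_right_distrib vector_scalar_commute)

lemma phi_deriv:
  assumes "bilinear_form (\<omega>::'k::real_normed_field^'n \<Rightarrow> 'k^'n \<Rightarrow> 'k)"
  shows "((\<lambda>x. moment_map \<omega> x S) has_derivative
           (\<lambda>h. 1/2 * (\<omega> (S *v w) h + \<omega> (S *v h) w))) (at w)"
proof -
  have bb: "bounded_bilinear (\<lambda>x y. \<omega> (S *v x) y)" by (rule bf_bb[OF bf_mat[OF assms]])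
  have "((\<lambda>x. \<omega> (S *v x) x) has_derivative (\<lambda>h. \<omega> (S *v w) h + \<omega> (S *v h) w)) (at w)"
    using bounded_bilinear.FDERIV[OF bb has_derivative_ident has_derivative_ident] by simp
  from has_derivative_mult_right[OF this, of "1/2"]
  show ?thesis unfolding moment_map_def by simp
qed

lemma phi_fd:
  assumes "bilinear_form (\<omega>::'k::real_normed_field^'n \<Rightarrow> 'k^'n \<Rightarrow> 'k)"
  shows "frechet_derivative (\<lambda>x. moment_map \<omega> x S) (at w) h
          = 1/2 * (\<omega> (S *v w) h + \<omega> (S *v h) w)"
proof -
  have "(\<lambda>h. 1/2 * (\<omega> (S *v w) h + \<omega> (S *v h) w)) = frechet_derivative (\<lambda>x. moment_map \<omega> x S) (at w)"
    by (rule frechet_derivative_at[OF phi_deriv[OF assms, of S w]])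
  from fun_cong[OF this, of h] show ?thesis by (simp only:)
qed

lemma phi2_deriv:
  assumes "bilinear_form (\<omega>::'k::real_normed_field^'n \<Rightarrow> 'k^'n \<Rightarrow> 'k)"
  shows "((\<lambda>w. frechet_derivative (\<lambda>x. moment_map \<omega> x S) (at w) h) has_derivative
           (\<lambda>k. 1/2 * (\<omega> (S *v k) h + \<omega> (S *v h) k))) (at y)"
proof -
  have bb: "bounded_bilinear (\<lambda>x y. \<omega> (S *v x) y)" by (rule bf_bb[OF bf_mat[OF assms]])
  have "bounded_linear (\<lambda>k. \<omega> (S *v k) h + \<omega> (S *v h) k)"
    by (intro bounded_linear_add bounded_bilinear.bounded_linear_left[OF bb]
          bounded_bilinear.bounded_linear_right[OF bb])
  then have "bounded_linear (\<lambda>k. 1/2 * (\<omega> (S *v k) h + \<omega> (S *v h) k))"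
    by (rule bounded_linear_compose[OF bounded_linear_mult_right])
  then show ?thesis unfolding phi_fd[OF assms]
    by (rule bounded_linear_imp_has_derivative)
qed

theorem theorem3p8:
  fixes G :: "('k::real_normed_field^'n^'n) set"
    and \<omega> :: "'k^'n \<Rightarrow> 'k^'n \<Rightarrow> 'k"
    and \<alpha> :: "('k^'n^'n \<Rightarrow> 'k) \<Rightarrow> 'k^'n^'n"
  assumes "lie_subalgebra G"
    and "bilinear_form \<omega>"
    and "\<forall>T\<in>G. \<forall>x y. \<omega> (T *v x) y + \<omega> x (T *v y) = 0"
    and "\<forall>z. \<alpha> z \<in> G"
  shows "(\<forall>y. \<forall>S\<in>G.
            (\<lambda>x. moment_map \<omega> x S) differentiable (at y) \<and>
            frechet_derivative (\<lambda>x. moment_map \<omega> x S) (at y) (\<alpha> (moment_map \<omega> y) *v y)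
              = beta (\<alpha> (moment_map \<omega> y)) (moment_map \<omega> y) S)
       \<and> ((\<forall>S\<in>G. \<forall>T\<in>G. T ** S ** T \<in> G) \<longrightarrow>
          (\<forall>y. \<forall>S\<in>G.
            (\<lambda>w. frechet_derivative (\<lambda>x. moment_map \<omega> x S) (at w) (\<alpha> (moment_map \<omega> y) *v y))
              differentiable (at y) \<and>
            second_deriv (\<lambda>x. moment_map \<omega> x S) y
                (\<alpha> (moment_map \<omega> y) *v y) (\<alpha> (moment_map \<omega> y) *v y)
              = - 2 * moment_map \<omega> y (\<alpha> (moment_map \<omega> y) ** S ** \<alpha> (moment_map \<omega> y))))"
proof (intro conjI allI ballI impI)
  have bf: "bilinear_form \<omega>" by fact
  have sub: "\<omega> (x - x') y = \<omega> x y - \<omega> x' y" for x x' y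
  proof -
    have "\<omega> ((x - x') + x') y = \<omega> (x - x') y + \<omega> x' y" using bf unfolding bilinear_form_def by blast
    then show ?thesis by simp
  qed
  fix y S assume S: "S \<in> G"
  define A where "A = \<alpha> (moment_map \<omega> y)"
  have AG: "A \<in> G" using assms(4) A_def by simp
  show "(\<lambda>x. moment_map \<omega> x S) differentiable (at y)"
    using phi_deriv[OF bf] unfolding differentiable_def by blast
  have inv: "\<omega> (A *v (S *v y)) y + \<omega> (S *v y) (A *v y) = 0"
    using assms(3) AG by blast
  show "frechet_derivative (\<lambda>x. moment_map \<omega> x S) (at y) (\<alpha> (moment_map \<omega> y) *v y)
              = beta (\<alpha> (moment_map \<omega> y)) (moment_map \<omega> y) S"
  proof -
    have e1: "(S ** A - A ** S) *v y = S *v (A *v y) - A *v (S *v y)"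
      by (simp add: matrix_vector_mult_diff_rdistrib matrix_vector_mul_assoc)
    have e2: "\<omega> (A *v (S *v y)) y = - \<omega> (S *v y) (A *v y)"
      using inv by (simp add: eq_neg_iff_add_eq_0)
    show ?thesis
      unfolding A_def[symmetric] unfolding phi_fd[OF bf] beta_def lie_bracket_def unfolding moment_map_def e1 sub e2
      by simp
  qed
next
  have bf: "bilinear_form \<omega>" by fact
  assume H: "\<forall>S\<in>G. \<forall>T\<in>G. T ** S ** T \<in> G"
  fix y S assume S: "S \<in> G"
  define A where "A = \<alpha> (moment_map \<omega> y)"
  have AG: "A \<in> G" using assms(4) A_def by simp
  show "(\<lambda>w. frechet_derivative (\<lambda>x. moment_map \<omega> x S) (at w) (\<alpha> (moment_map \<omega> y) *v y))
              differentiable (at y)"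
    using phi2_deriv[OF bf] unfolding differentiable_def by blast
  have inv: "\<omega> (A *v (S *v (A *v y))) y + \<omega> (S *v (A *v y)) (A *v y) = 0"
    using assms(3) AG by blast
  show "second_deriv (\<lambda>x. moment_map \<omega> x S) y
                (\<alpha> (moment_map \<omega> y) *v y) (\<alpha> (moment_map \<omega> y) *v y)
              = - 2 * moment_map \<omega> y (\<alpha> (moment_map \<omega> y) ** S ** \<alpha> (moment_map \<omega> y))"
  proof -
    have e1: "(A ** S ** A) *v y = A *v (S *v (A *v y))"
      by (simp add: matrix_vector_mul_assoc matrix_mul_assoc)
    have e2: "\<omega> (A *v (S *v (A *v y))) y = - \<omega> (S *v (A *v y)) (A *v y)"
      using inv by (simp add: eq_neg_iff_add_eq_0)
    have d: "second_deriv (\<lambda>x. moment_map \<omega> x S) y (A *v y) (A *v y)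
       = 1/2 * (\<omega> (S *v (A *v y)) (A *v y) + \<omega> (S *v (A *v y)) (A *v y))"
      unfolding second_deriv_def
      unfolding frechet_derivative_at[OF phi2_deriv[OF bf, of S "A *v y" y], symmetric]
      by (rule refl)
    have m: "moment_map \<omega> y (A ** S ** A) = 1/2 * (- \<omega> (S *v (A *v y)) (A *v y))"
      unfolding moment_map_def e1 e2 by (rule refl)
    have ar: "(1/2::'k) * (c + c) = - 2 * (1/2 * (- c))" for c :: 'k
      by (simp add: field_simps)
    show ?thesis
      unfolding A_def[symmetric] d m by (rule ar)
  qed
qed

end
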